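(* For every $d\ge1$, the simplex $S_d=\mathrm{conv}\{-\mathbf{1},e_1,\dots,e_d\}\subset\mathbb{R}^d$, where $\mathbf{1}=e_1+\dots+e_d$ is the all-ones vector and $e_i$ are the standard basis vectors, is simultaneously lattice reduced and lattice complete with respect to $\mathbb{Z}^d$.
   Context: For a lattice $\Gamma\subset\mathbb{R}^d$ with dual $\Gamma^\star=\{y:x\cdot y\in\mathbb{Z}\ \forall x\in\Gamma\}$ (for $\Gamma=\mathbb{Z}^d$, $\Gamma^\star=\mathbb{Z}^d$) and a convex body $K$: $\mathrm{wdt}_\Gamma(K)=\min_{y\in\Gamma^\star\setminus\{0\}}\max_{a,b\in K}y\cdot(a-b)$; a segment $[a,b]$ is a lattice segment if $b-a$ is parallel to a nonzero vector of $\Gamma$, with lattice length $|b-a|/|v|$ where $v$ generates $\Gamma\cap\mathrm{span}\{b-a\}$ and is a positive multiple of $b-a$; $\mathrm{diam}_\Gamma(K)$ is the maximum lattice length of a lattice segment in $K$. $K$ is lattice reduced if no convex body $K'\subsetneq K$ has the same lattice width, and lattice complete if no convex body $K'\supsetneq K$ has the same lattice diameter. *)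

theory Defs
  imports "HOL-Analysis.Analysis"
begin

text \<open>Everything is with respect to the lattice Gamma = Z^d, realised in real^'n
  (d = CARD('n)); its dual lattice is again Z^d.\<close>

definition int_vec :: "real^'n \<Rightarrow> bool" where
  "int_vec x \<longleftrightarrow> (\<forall>i. x $ i \<in> \<int>)"

definition convex_body :: "(real^'n) set \<Rightarrow> bool" where
  "convex_body K \<longleftrightarrow> convex K \<and> compact K \<and> interior K \<noteq> {}"

definition lattice_width :: "(real^'n) set \<Rightarrow> real" where
  "lattice_width K =
     Inf ((\<lambda>y. Sup {y \<bullet> (a - b) | a b. a \<in> K \<and> b \<in> K}) ` {y. int_vec y \<and> y \<noteq> 0})"

definition lattice_segment :: "real^'n \<Rightarrow> real^'n \<Rightarrow> bool" where
  "lattice_segment a b \<longleftrightarrow> a \<noteq> b \<and> (\<exists>v. int_vec v \<and> v \<noteq> 0 \<and> (\<exists>c::real. b - a = c *\<^sub>R v))"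

definition seg_generator :: "real^'n \<Rightarrow> real^'n \<Rightarrow> real^'n \<Rightarrow> bool" where
  "seg_generator a b v \<longleftrightarrow> int_vec v \<and> (\<exists>t>0. v = t *\<^sub>R (b - a)) \<and>
     (\<forall>w. int_vec w \<and> w \<in> span {b - a} \<longrightarrow> (\<exists>k::int. w = of_int k *\<^sub>R v))"

definition lattice_length :: "real^'n \<Rightarrow> real^'n \<Rightarrow> real" where
  "lattice_length a b = norm (b - a) / norm (THE v. seg_generator a b v)"

definition lattice_diam :: "(real^'n) set \<Rightarrow> real" where
  "lattice_diam K = Sup {lattice_length a b | a b. a \<in> K \<and> b \<in> K \<and> lattice_segment a b}"

definition lattice_reduced :: "(real^'n) set \<Rightarrow> bool" where
  "lattice_reduced K \<longleftrightarrow> convex_body K \<and>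
     (\<forall>K'. convex_body K' \<and> K' \<subset> K \<longrightarrow> lattice_width K' \<noteq> lattice_width K)"

definition lattice_complete :: "(real^'n) set \<Rightarrow> bool" where
  "lattice_complete K \<longleftrightarrow> convex_body K \<and>
     (\<forall>K'. convex_body K' \<and> K \<subset> K' \<longrightarrow> lattice_diam K' \<noteq> lattice_diam K)"

definition simplex_S :: "(real^'n) set" where
  "simplex_S = convex hull (insert (- (\<chi> i. 1)) (range (\<lambda>i. axis i 1)))"

end

theory Submission
  imports Defs
begin

definition mu :: "real^'n \<Rightarrow> real" where
  "mu x = (1 - (\<Sum>i\<in>UNIV. x$i)) / (real CARD('n) + 1)"

definition Tset :: "(real^'n) set" where
  "Tset = {x. 0 \<le> mu x \<and> (\<forall>i. 0 \<le> x$i + mu x)}"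

lemma sum_lam: "(\<Sum>i\<in>UNIV. (x::real^'n)$i + mu x) = 1 - mu x"
proof -
  have "(\<Sum>i\<in>UNIV. x$i + mu x) = (\<Sum>i\<in>UNIV. x$i) + real CARD('n) * mu x"
    by (simp add: sum.distrib)
  also have "\<dots> = 1 - mu x"
    unfolding mu_def by (simp add: field_simps)
  finally show ?thesis .
qed

lemma sum_opt: "(\<Sum>j\<in>(UNIV::'n::finite option set). h j) = h None + (\<Sum>i\<in>UNIV. h (Some i))"
  unfolding UNIV_option_conv by (subst sum.insert) (auto simp: sum.reindex)

lemma mu_affine: "u + v = 1 \<Longrightarrow> mu (u *\<^sub>R x + v *\<^sub>R y) = u * mu x + v * mu (y::real^'n)"
proof -
  have s: "(\<Sum>i\<in>UNIV. (u *\<^sub>R x + v *\<^sub>R y)$i) = u * (\<Sum>i\<in>UNIV. x$i) + v * (\<Sum>i\<in>UNIV. y$i)"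
    by (simp add: sum.distrib sum_distrib_left)
  assume "u + v = 1"
  then have "1 - (u * (\<Sum>i\<in>UNIV. x$i) + v * (\<Sum>i\<in>UNIV. y$i)) = u * (1 - (\<Sum>i\<in>UNIV. x$i)) + v * (1 - (\<Sum>i\<in>UNIV. y$i))"
    by (simp add: algebra_simps)
  then show ?thesis unfolding mu_def s by (simp add: add_divide_distrib)
qed

lemma convex_T: "convex (Tset :: (real^'n) set)"
  unfolding convex_def Tset_def
proof (clarsimp)
  fix x y :: "real^'n" and u v :: real
  assume h: "0 \<le> mu x" "\<forall>i. 0 \<le> x $ i + mu x" "0 \<le> mu y" "\<forall>i. 0 \<le> y $ i + mu y"
    "0 \<le> u" "0 \<le> v" "u + v = 1"
  have m: "mu (u *\<^sub>R x + v *\<^sub>R y) = u * mu x + v * mu y" using mu_affine h(7) .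
  show "0 \<le> mu (u *\<^sub>R x + v *\<^sub>R y) \<and> (\<forall>i. 0 \<le> u * x $ i + v * y $ i + mu (u *\<^sub>R x + v *\<^sub>R y))"
  proof
    show "0 \<le> mu (u *\<^sub>R x + v *\<^sub>R y)" using m h by simp
    show "\<forall>i. 0 \<le> u * x $ i + v * y $ i + mu (u *\<^sub>R x + v *\<^sub>R y)"
    proof
      fix i
      have "u * x $ i + v * y $ i + mu (u *\<^sub>R x + v *\<^sub>R y) = u * (x$i + mu x) + v * (y$i + mu y)"
        using m by (simp add: algebra_simps)
      also have "\<dots> \<ge> 0" using h by simp
      finally show "0 \<le> u * x $ i + v * y $ i + mu (u *\<^sub>R x + v *\<^sub>R y)" .
    qed
  qed
qed

definition onev :: "real^'n" where "onev = (\<chi> i. 1)"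

lemma sum_axis: "(\<Sum>i\<in>UNIV. axis i (1::real) $ j) = 1"
  by (simp add: axis_def)

lemma mu_axis: "mu (axis k 1 :: real^'n) = 0"
  unfolding mu_def by (simp add: axis_def)

lemma mu_m1: "mu (- onev :: real^'n) = 1"
  unfolding mu_def onev_def by simp

lemma S_char: "(simplex_S :: (real^'n) set) = Tset"
proof
  show "simplex_S \<subseteq> (Tset :: (real^'n) set)"
    unfolding simplex_S_def
  proof (rule hull_minimal)
    show "convex (Tset :: (real^'n) set)" by (rule convex_T)
    show "insert (- (\<chi> i. 1)) (range (\<lambda>i. axis i 1)) \<subseteq> (Tset :: (real^'n) set)"
    proof -
      have "axis i 1 \<in> (Tset :: (real^'n) set)" for i
        unfolding Tset_def using mu_axis[of i] by (simp add: axis_def)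
      moreover have "- (\<chi> i. 1) \<in> (Tset :: (real^'n) set)"
        unfolding Tset_def using mu_m1[where 'n='n] unfolding onev_def by simp
      ultimately show ?thesis by auto
    qed
  qed
next
  show "Tset \<subseteq> (simplex_S :: (real^'n) set)"
  proof
    fix x :: "real^'n" assume xT: "x \<in> Tset"
    define u where "u j = (case j of None \<Rightarrow> mu x | Some i \<Rightarrow> x$i + mu x)" for j
    define z where "z j = (case j of None \<Rightarrow> - onev | Some i \<Rightarrow> axis i 1)" for j :: "'n option"
    have "(\<Sum>j\<in>UNIV. u j *\<^sub>R z j) \<in> simplex_S"
      unfolding simplex_S_def
    proof (rule convex_sum)
      show "finite (UNIV :: 'n option set)" by simp
      show "convex (convex hull (insert (- (\<chi> i. 1)) (range (\<lambda>i. axis i 1))) :: (real^'n) set)"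
        by simp
      show "sum u UNIV = 1" unfolding sum_opt u_def using sum_lam[of x] by simp
      show "0 \<le> u i" for i using xT unfolding u_def Tset_def by (cases i) auto
      show "z i \<in> convex hull (insert (- (\<chi> i. 1)) (range (\<lambda>i. axis i 1)))" for i
        unfolding z_def onev_def by (cases i) (auto intro: hull_inc)
    qed
    moreover have "(\<Sum>j\<in>UNIV. u j *\<^sub>R z j) = x"
    proof (rule vec_eq_iff[THEN iffD2, rule_format])
      fix k
      have "(\<Sum>j\<in>UNIV. u j *\<^sub>R z j) $ k = - mu x + (\<Sum>i\<in>UNIV. (x$i + mu x) * axis i 1 $ k)"
        unfolding sum_opt u_def z_def onev_def by simp
      also have "\<dots> = x $ k"
      proof -
        have "(\<Sum>i\<in>UNIV. (x$i + mu x) * axis i 1 $ k) = (\<Sum>i\<in>UNIV. if k = i then x$i + mu x else 0)"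
          by (rule sum.cong) (auto simp: axis_def)
        then show ?thesis by simp
      qed
      finally show "(\<Sum>j\<in>UNIV. u j *\<^sub>R z j) $ k = x $ k" .
    qed
    ultimately show "x \<in> simplex_S" by simp
  qed
qed

lemma int_vec_axis: "int_vec (axis i 1 :: real^'n)"
  unfolding int_vec_def axis_def by auto

lemma axis_nz: "(axis i 1 :: real^'n) \<noteq> 0"
  by (simp add: axis_eq_0_iff)

lemma inner_axis1: "(y::real^'n) \<bullet> axis i 1 = y$i"
  by (simp add: inner_axis)

lemma inner_onev: "(y::real^'n) \<bullet> onev = (\<Sum>i\<in>UNIV. y$i)"
  unfolding onev_def inner_vec_def by simp

lemma Ints_pos_ge1: "(x::real) \<in> \<int> \<Longrightarrow> 0 < x \<Longrightarrow> 1 \<le> x"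
  by (metis Ints_cases of_int_0_less_iff of_int_1_le_iff zero_less_imp_eq_int int_one_le_iff_zero_less)

lemma Ints_neg_le1: "(x::real) \<in> \<int> \<Longrightarrow> x < 0 \<Longrightarrow> x \<le> -1"
  using Ints_pos_ge1[of "-x"] by (simp add: Ints_minus)

lemma S_compact: "compact (simplex_S :: (real^'n) set)"
  unfolding simplex_S_def by (intro compact_convex_hull finite_imp_compact) simp

lemma S_convex: "convex (simplex_S :: (real^'n) set)"
  unfolding simplex_S_def by simp

lemma S_interior: "(0::real^'n) \<in> interior simplex_S"
proof -
  define A where "A = real CARD('n) + 1"
  have Apos: "A > 0" unfolding A_def by simp
  define r where "r = 1 / (2 * A)"
  have rpos: "r > 0" unfolding r_def using Apos by simp
  have "ball 0 r \<subseteq> (Tset :: (real^'n) set)"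
  proof
    fix x :: "real^'n" assume "x \<in> ball 0 r"
    then have nx: "norm x < r" by simp
    have ci: "\<bar>x$i\<bar> < r" for i using component_le_norm_cart[of x i] nx by linarith
    have "\<bar>\<Sum>i\<in>UNIV. x$i\<bar> \<le> (\<Sum>i\<in>UNIV. \<bar>x$i\<bar>)" by (rule sum_abs)
    also have "\<dots> \<le> (\<Sum>i\<in>(UNIV::'n set). r)" by (intro sum_mono) (simp add: ci less_imp_le)
    also have "\<dots> = real CARD('n) * r" by simp
    finally have sb: "\<bar>\<Sum>i\<in>UNIV. x$i\<bar> \<le> real CARD('n) * r" .
    have Dr: "real CARD('n) * r \<le> 1/2" unfolding r_def A_def by (simp add: field_simps)
    have mu_ge: "mu x \<ge> 1 / (2*A)"
    proof -
      have "1 - (\<Sum>i\<in>UNIV. x$i) \<ge> 1/2" using sb Dr by linarith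
      then have "(1 - (\<Sum>i\<in>UNIV. x$i)) / A \<ge> (1/2) / A" using Apos by (intro divide_right_mono) auto
      then show ?thesis unfolding mu_def A_def by simp
    qed
    have "0 \<le> mu x" using mu_ge Apos by (smt (verit) divide_pos_pos)
    moreover have "0 \<le> x$i + mu x" for i using mu_ge ci[of i] unfolding r_def by linarith
    ultimately show "x \<in> Tset" unfolding Tset_def by simp
  qed
  then have "ball 0 r \<subseteq> (simplex_S :: (real^'n) set)" using S_char[where 'n='n] by simp
  then show ?thesis using rpos by (meson centre_in_ball interior_maximal open_ball subsetD)
qed

lemma S_body: "convex_body (simplex_S :: (real^'n) set)"
  unfolding convex_body_def using S_compact S_convex S_interior by blast

lemma W_compact:
  assumes "compact (K :: (real^'n) set)"
  shows "compact {y \<bullet> (a - b) |a b. a \<in> K \<and> b \<in> K}"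
proof -
  have eq: "{y \<bullet> (a - b) |a b. a \<in> K \<and> b \<in> K} = (\<lambda>z. y \<bullet> (fst z - snd z)) ` (K \<times> K)"
    by force
  show ?thesis unfolding eq
    by (intro compact_continuous_image compact_Times assms) (intro continuous_intros)
qed

lemma T_facts:
  assumes "x \<in> (Tset :: (real^'n) set)"
  shows "x$i \<le> 1" "x$i \<ge> -1" "x$i = 1 \<Longrightarrow> x = axis i 1" "x$i = -1 \<Longrightarrow> x = - onev"
proof -
  have m: "0 \<le> mu x" and l: "\<And>j. 0 \<le> x$j + mu x" using assms unfolding Tset_def by auto
  have s: "(\<Sum>j\<in>UNIV. x$j + mu x) = 1 - mu x" by (rule sum_lam)
  have rem: "(\<Sum>j\<in>UNIV. x$j + mu x) = (x$i + mu x) + (\<Sum>j\<in>UNIV-{i}. x$j + mu x)"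
    by (simp add: sum.remove)
  have rn: "(\<Sum>j\<in>UNIV-{i}. x$j + mu x) \<ge> 0" using l by (simp add: sum_nonneg)
  show "x$i \<le> 1" using s rem rn m by linarith
  show "x$i \<ge> -1" using s rem rn m l[of i] by linarith
  show "x = axis i 1" if h: "x$i = 1"
  proof -
    have "mu x = 0" using s rem rn m h by linarith
    have z: "(\<Sum>j\<in>UNIV-{i}. x$j + mu x) = 0" using s rem rn m h by linarith
    have "\<forall>j\<in>UNIV-{i}. x$j + mu x = 0"
      using z l by (subst sum_nonneg_eq_0_iff[symmetric]) auto
    then show ?thesis using \<open>mu x = 0\<close> h
      by (auto simp: vec_eq_iff axis_def)
  qed
  show "x = - onev" if h: "x$i = -1"
  proof -
    have "mu x = 1" using s rem rn m h l[of i] by linarith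
    have z: "(\<Sum>j\<in>UNIV-{i}. x$j + mu x) = 0" using s rem rn m h l[of i] by linarith
    have "\<forall>j\<in>UNIV-{i}. x$j + mu x = 0"
      using z l by (subst sum_nonneg_eq_0_iff[symmetric]) auto
    then have "x$j = -1" for j
    proof (cases "j = i")
      case False
      then have "x$j + mu x = 0" using \<open>\<forall>j\<in>UNIV-{i}. x$j + mu x = 0\<close> by blast
      then show ?thesis using \<open>mu x = 1\<close> by linarith
    qed (use h in simp)
    then show ?thesis by (auto simp: vec_eq_iff onev_def)
  qed
qed

lemma vertices_in_S: "axis i 1 \<in> (simplex_S :: (real^'n) set)" "- onev \<in> (simplex_S :: (real^'n) set)"
  unfolding simplex_S_def onev_def by (auto intro: hull_inc)

lemma width_dir_ge2:
  assumes "int_vec (y::real^'n)" "y \<noteq> 0"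
  shows "\<exists>a\<in>simplex_S. \<exists>b\<in>simplex_S. y \<bullet> (a - b) \<ge> 2"
proof -
  have yi: "y$i \<in> \<int>" for i using assms(1) unfolding int_vec_def by simp
  have ys: "(\<Sum>i\<in>UNIV. y$i) \<in> \<int>" using yi by (simp add: Ints_sum)
  show ?thesis
  proof (cases "\<exists>i. y$i > 0")
    case True
    then obtain i where i: "y$i > 0" by blast
    have i1: "y$i \<ge> 1" using Ints_pos_ge1 yi i by blast
    show ?thesis
    proof (cases "\<exists>j. y$j < 0")
      case True
      then obtain j where j: "y$j < 0" by blast
      have "y$j \<le> -1" using Ints_neg_le1 yi j by blast
      then have "y \<bullet> (axis i 1 - axis j 1) \<ge> 2" using i1 by (simp add: inner_diff_right inner_axis1)
      then show ?thesis using vertices_in_S by blast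
    next
      case False
      then have "\<forall>j. y$j \<ge> 0" by (simp add: not_less)
      then have "(\<Sum>j\<in>UNIV. y$j) \<ge> y$i" by (intro member_le_sum) auto
      then have "y \<bullet> (axis i 1 - (- onev)) \<ge> 2" using i1 by (simp add: inner_diff_right inner_add_right inner_axis1 inner_onev)
      then show ?thesis using vertices_in_S by blast
    qed
  next
    case False
    then have np: "\<forall>j. y$j \<le> 0" by (simp add: not_less)
    obtain i where "y$i \<noteq> 0" using assms(2) by (metis vec_eq_iff zero_index)
    then have "y$i < 0" using np by (metis less_le)
    then have i1: "y$i \<le> -1" using Ints_neg_le1 yi by blast
    have "(\<Sum>j\<in>UNIV. y$j) = y$i + (\<Sum>j\<in>UNIV-{i}. y$j)" by (simp add: sum.remove)
    moreover have "(\<Sum>j\<in>UNIV-{i}. y$j) \<le> 0" using np by (simp add: sum_nonpos)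
    ultimately have "(\<Sum>j\<in>UNIV. y$j) \<le> -1" using i1 by linarith
    then have "y \<bullet> (- onev - axis i 1) \<ge> 2" using i1 by (simp add: inner_diff_right inner_axis1 inner_onev)
    then show ?thesis using vertices_in_S by blast
  qed
qed

lemma width_S_ge2: "lattice_width (simplex_S :: (real^'n) set) \<ge> 2"
  unfolding lattice_width_def
proof (rule cInf_greatest)
  obtain i :: 'n where True by blast
  show "(\<lambda>y. Sup {y \<bullet> (a - b) |a b. a \<in> (simplex_S :: (real^'n) set) \<and> b \<in> simplex_S}) ` {y. int_vec y \<and> y \<noteq> 0} \<noteq> {}"
    using int_vec_axis[of i] axis_nz[of i] by blast
next
  fix w assume "w \<in> (\<lambda>y. Sup {y \<bullet> (a - b) |a b. a \<in> (simplex_S :: (real^'n) set) \<and> b \<in> simplex_S}) ` {y. int_vec y \<and> y \<noteq> 0}"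
  then obtain y where y: "int_vec y" "y \<noteq> 0" and w: "w = Sup {y \<bullet> (a - b) |a b. a \<in> (simplex_S :: (real^'n) set) \<and> b \<in> simplex_S}"
    by blast
  obtain a b where ab: "a \<in> simplex_S" "b \<in> simplex_S" "y \<bullet> (a - b) \<ge> 2" using width_dir_ge2[OF y] by blast
  have "bdd_above {y \<bullet> (a - b) |a b. a \<in> (simplex_S :: (real^'n) set) \<and> b \<in> simplex_S}"
    by (intro bounded_imp_bdd_above compact_imp_bounded W_compact S_compact)
  then have "y \<bullet> (a - b) \<le> w" unfolding w by (rule cSup_upper[rotated]) (use ab in blast)
  then show "2 \<le> w" using ab by linarith
qed

lemma dirwidth_nonneg:
  assumes "compact (K::(real^'n) set)" "K \<noteq> {}"
  shows "0 \<le> Sup {y \<bullet> (a - b) |a b. a \<in> K \<and> b \<in> K}"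
proof -
  obtain a where "a \<in> K" using assms by blast
  have "bdd_above {y \<bullet> (a - b) |a b. a \<in> K \<and> b \<in> K}"
    by (intro bounded_imp_bdd_above compact_imp_bounded W_compact assms)
  moreover have "0 \<in> {y \<bullet> (a - b) |a b. a \<in> K \<and> b \<in> K}" using \<open>a \<in> K\<close> by force
  ultimately show ?thesis by (rule cSup_upper[rotated])
qed

lemma reduced: "lattice_reduced (simplex_S :: (real^'n) set)"
  unfolding lattice_reduced_def
proof (intro conjI allI impI)
  show "convex_body (simplex_S :: (real^'n) set)" by (rule S_body)
  fix K' :: "(real^'n) set"
  assume h: "convex_body K' \<and> K' \<subset> simplex_S"
  then have cK: "convex K'" "compact K'" "K' \<noteq> {}" and sub: "K' \<subset> simplex_S"
    unfolding convex_body_def using interior_subset by blast+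
  obtain i :: 'n where i: "\<not> (axis i 1 \<in> K' \<and> - onev \<in> K')"
  proof -
    have "\<not> insert (- (\<chi> i. 1)) (range (\<lambda>i. axis i 1)) \<subseteq> K'"
    proof
      assume "insert (- (\<chi> i. 1)) (range (\<lambda>i. axis i 1)) \<subseteq> K'"
      then have "simplex_S \<subseteq> K'" unfolding simplex_S_def using cK(1) by (intro hull_minimal) auto
      then show False using sub by blast
    qed
    then obtain v where "v \<in> insert (- onev) (range (\<lambda>i. axis i 1))" "v \<notin> K'" unfolding onev_def by blast
    then show ?thesis using that by (metis imageE insertE)
  qed
  define y :: "real^'n" where "y = axis i 1"
  define X where "X = {y \<bullet> (a - b) |a b. a \<in> K' \<and> b \<in> K'}"
  have Xc: "compact X" unfolding X_def using W_compact cK(2) .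
  have "X \<noteq> {}" using cK(3) unfolding X_def by blast
  then have "Sup X \<in> X" using Xc
    by (intro closed_contains_Sup bounded_imp_bdd_above compact_imp_bounded compact_imp_closed)
  then obtain a b where ab: "a \<in> K'" "b \<in> K'" "Sup X = y \<bullet> (a - b)" unfolding X_def by blast
  have aT: "a \<in> Tset" "b \<in> Tset" using ab sub S_char by blast+
  have "Sup X = a$i - b$i" using ab(3) unfolding y_def by (simp add: inner_diff_right inner_axis1 inner_commute)
  moreover have "a$i \<le> 1" "b$i \<ge> -1" using T_facts aT by blast+
  moreover have "\<not> (a$i = 1 \<and> b$i = -1)" using T_facts(3)[OF aT(1)] T_facts(4)[OF aT(2)] ab i by blast
  ultimately have SX: "Sup X < 2" by linarith
  have "lattice_width K' \<le> Sup X"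
    unfolding lattice_width_def
  proof (rule cInf_lower)
    show "Sup X \<in> (\<lambda>y. Sup {y \<bullet> (a - b) |a b. a \<in> K' \<and> b \<in> K'}) ` {y. int_vec y \<and> y \<noteq> 0}"
      unfolding X_def y_def using int_vec_axis axis_nz by blast
    show "bdd_below ((\<lambda>y. Sup {y \<bullet> (a - b) |a b. a \<in> K' \<and> b \<in> K'}) ` {y. int_vec y \<and> y \<noteq> 0})"
      using dirwidth_nonneg[OF cK(2,3)] by (intro bdd_belowI[where m=0]) blast
  qed
  then have "lattice_width K' < lattice_width (simplex_S :: (real^'n) set)" using SX width_S_ge2[where 'n='n] by linarith
  then show "lattice_width K' \<noteq> lattice_width (simplex_S :: (real^'n) set)" by simp
qed

lemma int_vec_diff: "int_vec x \<Longrightarrow> int_vec y \<Longrightarrow> int_vec (x - y)"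
  unfolding int_vec_def by (simp add: Ints_diff)

lemma int_vec_scale: "int_vec x \<Longrightarrow> int_vec (of_int k *\<^sub>R x)"
  unfolding int_vec_def by (simp add: Ints_mult)

lemma int_vec_neg: "int_vec x \<Longrightarrow> int_vec (- x)"
  unfolding int_vec_def by (simp add: Ints_minus)

lemma norm_intvec_ge1:
  assumes "int_vec (g::real^'n)" "g \<noteq> 0" shows "norm g \<ge> 1"
proof -
  obtain i where "g$i \<noteq> 0" using assms(2) by (metis vec_eq_iff zero_index)
  moreover have "g$i \<in> \<int>" using assms(1) unfolding int_vec_def by simp
  ultimately have "\<bar>g$i\<bar> \<ge> 1"
  proof (cases "g$i > 0")
    case True then show ?thesis using Ints_pos_ge1 \<open>g$i \<in> \<int>\<close> by force
  next
    case False then have "g$i < 0" using \<open>g$i \<noteq> 0\<close> by simp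
    then show ?thesis using Ints_neg_le1 \<open>g$i \<in> \<int>\<close> by force
  qed
  then show ?thesis using component_le_norm_cart[of g i] by linarith
qed

lemma in_span1: "w \<in> span {u} \<Longrightarrow> \<exists>t. w = t *\<^sub>R (u::real^'n)"
  by (auto simp: span_singleton)

lemma gen_unique:
  assumes ab: "a \<noteq> b" and g: "seg_generator a b g" and g': "seg_generator a b g'"
  shows "g = g'"
proof -
  obtain t where t: "t > 0" "g = t *\<^sub>R (b - a)" using g unfolding seg_generator_def by blast
  obtain t' where t': "t' > 0" "g' = t' *\<^sub>R (b - a)" using g' unfolding seg_generator_def by blast
  have sp: "g \<in> span {b - a}" "g' \<in> span {b - a}" using t t' by (auto intro: span_mul span_base)
  obtain k :: int where k: "g' = of_int k *\<^sub>R g" using g g' sp unfolding seg_generator_def by blast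
  obtain k' :: int where k': "g = of_int k' *\<^sub>R g'" using g g' sp unfolding seg_generator_def by blast
  have nz: "b - a \<noteq> 0" using ab by simp
  have "t' *\<^sub>R (b - a) = (of_int k * t) *\<^sub>R (b - a)" using k t t' by simp
  then have "t' = of_int k * t" using nz by simp
  have "t *\<^sub>R (b - a) = (of_int k' * t') *\<^sub>R (b - a)" using k' t t' by simp
  then have "t = of_int k' * t'" using nz by simp
  then have "t = of_int k' * of_int k * t" using \<open>t' = of_int k * t\<close> by simp
  then have "of_int k' * of_int k = (1::real)" using t by simp
  then have kk: "k * k' = 1" by (metis of_int_eq_1_iff of_int_mult mult.commute)
  have "of_int k = t' / t" using \<open>t' = of_int k * t\<close> t by simp
  then have "(of_int k :: real) > 0" using t t' by simp
  then have "k > 0" by simp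
  then have "k = 1" using kk pos_zmult_eq_1_iff by blast
  then show ?thesis using k by simp
qed

lemma gen_exists:
  assumes "lattice_segment a (b::real^'n)"
  shows "\<exists>g. seg_generator a b g"
proof -
  define u where "u = b - a"
  obtain v c where v: "int_vec v" "v \<noteq> 0" "u = c *\<^sub>R v" and ab: "a \<noteq> b"
    using assms unfolding lattice_segment_def u_def by blast
  have unz: "u \<noteq> 0" using ab u_def by simp
  then obtain i where ui: "u$i \<noteq> 0" by (metis vec_eq_iff zero_index)
  define \<delta> where "\<delta> = \<bar>u$i\<bar>"
  have dpos: "\<delta> > 0" using ui \<delta>_def by simp
  define N where "N = {n::nat. 0 < n \<and> int_vec ((real n / \<delta>) *\<^sub>R u)}"
  have cnz: "c \<noteq> 0" using v unz by auto
  have vi: "v$i \<noteq> 0" using ui v by simp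
  obtain m where m: "v$i = of_int m" using v(1) unfolding int_vec_def by (metis Ints_cases)
  have "nat \<bar>m\<bar> \<in> N"
  proof -
    have r: "real (nat \<bar>m\<bar>) = \<bar>v$i\<bar>" using m by simp
    have "(\<bar>v$i\<bar> / \<delta>) *\<^sub>R u = (c / \<bar>c\<bar>) *\<^sub>R v"
      unfolding \<delta>_def using v(3) cnz vi by (simp add: abs_mult field_simps)
    moreover have "int_vec ((c / \<bar>c\<bar>) *\<^sub>R v)"
    proof (cases "c > 0")
      case True then show ?thesis using v(1) by simp
    next
      case False then have "c < 0" using cnz by simp
      then show ?thesis using int_vec_neg[OF v(1)] by simp
    qed
    moreover have "0 < nat \<bar>m\<bar>" using m vi by auto
    ultimately show ?thesis unfolding N_def using r by simp
  qed
  then have Nne: "N \<noteq> {}" by blast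
  define n0 where "n0 = (LEAST n. n \<in> N)"
  have n0N: "n0 \<in> N" unfolding n0_def using Nne by (metis LeastI ex_in_conv)
  have n0min: "\<And>n. n \<in> N \<Longrightarrow> n0 \<le> n" unfolding n0_def by (rule Least_le)
  define g where "g = (real n0 / \<delta>) *\<^sub>R u"
  have gi: "int_vec g" and n0pos: "0 < n0" using n0N unfolding N_def g_def by auto
  have "seg_generator a b g"
    unfolding seg_generator_def
  proof (intro conjI allI impI)
    show "int_vec g" by (rule gi)
    show "\<exists>t>0. g = t *\<^sub>R (b - a)" unfolding g_def u_def using n0pos dpos by (intro exI[of _ "real n0 / \<delta>"]) auto
    fix w assume w: "int_vec w \<and> w \<in> span {b - a}"
    then obtain \<tau> where tau: "w = \<tau> *\<^sub>R u" unfolding u_def using in_span1 by blast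
    have "w$i \<in> \<int>" using w unfolding int_vec_def by simp
    then have "\<tau> * \<delta> \<in> \<int>" unfolding \<delta>_def using tau
      by (cases "u$i \<ge> 0") (auto simp: Ints_minus)
    then obtain m where m: "\<tau> * \<delta> = of_int m" by (metis Ints_cases)
    have wm: "w = (of_int m / \<delta>) *\<^sub>R u" using tau m dpos by (simp add: field_simps)
    define q where "q = m div int n0"
    define r where "r = m mod int n0"
    have mqr: "m = q * int n0 + r" unfolding q_def r_def by simp
    have r0: "0 \<le> r" "r < int n0" unfolding r_def using n0pos by auto
    have md: "of_int m / \<delta> = of_int r / \<delta> + of_int q * (real n0 / \<delta>)"
      using mqr by (simp add: add_divide_distrib)
    have "(of_int r / \<delta>) *\<^sub>R u = w - of_int q *\<^sub>R g"
      unfolding wm g_def md by (simp add: scaleR_add_left)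
    then have ri: "int_vec ((of_int r / \<delta>) *\<^sub>R u)" using int_vec_diff[OF conjunct1[OF w] int_vec_scale[OF gi]] by simp
    have "r = 0"
    proof (rule ccontr)
      assume "r \<noteq> 0"
      then have "nat r \<in> N" unfolding N_def using ri r0 by simp
      then have "n0 \<le> nat r" by (rule n0min)
      then show False using r0 by linarith
    qed
    then show "\<exists>k::int. w = of_int k *\<^sub>R g" using wm mqr g_def
      by (intro exI[of _ q]) (simp add: field_simps)
  qed
  then show ?thesis by blast
qed

lemma length_gen:
  assumes "a \<noteq> b" "seg_generator a b g"
  shows "lattice_length a b = norm (b - a) / norm g"
proof -
  have "(THE v. seg_generator a b v) = g"
    using assms gen_unique by (intro the_equality) blast+
  then show ?thesis unfolding lattice_length_def by simp
qed

lemma length_gen':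
  assumes "a \<noteq> b" "seg_generator a b g" "b - a = c *\<^sub>R g" "c > 0"
  shows "lattice_length a b = c"
proof -
  have "g \<noteq> 0" using assms by auto
  then show ?thesis using length_gen[OF assms(1,2)] assms(3,4) by simp
qed

lemma length_le_norm:
  assumes "lattice_segment a (b::real^'n)"
  shows "lattice_length a b \<le> norm (b - a)"
proof -
  obtain g where g: "seg_generator a b g" using gen_exists[OF assms] by blast
  have ab: "a \<noteq> b" using assms unfolding lattice_segment_def by simp
  obtain t where t: "t > 0" "g = t *\<^sub>R (b - a)" using g unfolding seg_generator_def by blast
  have "g \<noteq> 0" using t ab by simp
  then have "norm g \<ge> 1" using g norm_intvec_ge1 unfolding seg_generator_def by blast
  then have "norm (b - a) / norm g \<le> norm (b - a) / 1" by (intro divide_left_mono) auto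
  then show ?thesis using length_gen[OF ab g] by simp
qed

lemma term_bound:
  fixes t r A :: int
  assumes "A > 0" "t mod A = r" "0 < r"
  shows "r * (A - r) \<le> r * max 0 (-t) + (A - r) * max 0 t"
proof -
  have rA: "r < A" using assms pos_mod_bound by blast
  define q where "q = t div A"
  have t: "t = A * q + r" unfolding q_def using assms(2) div_mult_mod_eq[of t A] by (simp add: mult.commute)
  show ?thesis
  proof (cases "q \<ge> 0")
    case True
    then have "t \<ge> r" using t assms(1) by simp
    then have "(A - r) * r \<le> (A - r) * t" using rA by (intro mult_left_mono) auto
    then show ?thesis using \<open>t \<ge> r\<close> assms(3) by (simp add: mult.commute)
  next
    case False
    then have "A * q \<le> - A" using assms(1) by (smt (verit) mult_le_cancel_left1 mult_minus_right mult.commute)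
    then have "-t \<ge> A - r" using t by linarith
    then have "r * (A - r) \<le> r * (-t)" using assms(3) by (intro mult_left_mono) auto
    then show ?thesis using \<open>-t \<ge> A - r\<close> rA by simp
  qed
qed

lemma term_bound0:
  fixes t A :: int
  assumes "A > 0" "t mod A = 0" "t < 0"
  shows "A \<le> - t"
proof -
  obtain q where t: "t = A * q" using assms(2) by (metis dvd_def mod_0_imp_dvd)
  then have "q < 0" using assms by (smt (verit) zero_le_mult_iff)
  then have "A * q \<le> - A" using assms(1) by (smt (verit) mult_le_cancel_left1 mult_minus_right mult.commute)
  then show ?thesis using t by linarith
qed

lemma int_key:
  fixes g :: "'n::finite \<Rightarrow> int"
  assumes gnz: "\<exists>i. g i \<noteq> 0"
  shows "int CARD('n) \<le> max 0 (\<Sum>i\<in>UNIV. g i) + (\<Sum>i\<in>UNIV. max 0 ((\<Sum>i\<in>UNIV. g i) - (int CARD('n) + 1) * g i))"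
proof -
  define n where "n = int CARD('n)"
  define A where "A = n + 1"
  define s where "s = (\<Sum>i\<in>UNIV. g i)"
  define W where "W i = A * g i - s" for i
  define N where "N = max 0 s + (\<Sum>i\<in>UNIV. max 0 (- W i))"
  define P where "P = max 0 (- s) + (\<Sum>i\<in>UNIV. max 0 (W i))"
  have Apos: "A > 0" unfolding A_def n_def by simp
  have sumW: "(\<Sum>i\<in>UNIV. W i) = s"
    unfolding W_def s_def A_def n_def by (simp add: sum_subtractf sum_distrib_left sum_distrib_right sum.distrib algebra_simps)
  have PN: "P = N"
  proof -
    have "P - N = - s + (\<Sum>i\<in>UNIV. max 0 (W i) - max 0 (- W i))"
      unfolding P_def N_def by (simp add: sum_subtractf)
    also have "\<dots> = - s + (\<Sum>i\<in>UNIV. W i)" by (intro arg_cong2[where f="(+)"] sum.cong) auto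
    also have "\<dots> = 0" using sumW by simp
    finally show ?thesis by simp
  qed
  define r where "r = (- s) mod A"
  have Wr: "W i mod A = r" for i unfolding W_def r_def
    by (metis add.commute diff_conv_add_uminus mod_mult_self2 mult.commute)
  have Nnn: "0 \<le> (\<Sum>i\<in>UNIV. max 0 (- W i))" by (simp add: sum_nonneg)
  have goal: "n \<le> N"
  proof (cases "r = 0")
    case True
    have "N \<noteq> 0"
    proof
      assume N0: "N = 0"
      then have s0: "max 0 s = 0" and "(\<Sum>i\<in>UNIV. max 0 (- W i)) = 0" unfolding N_def using Nnn by linarith+
      then have nW: "\<forall>i. max 0 (- W i) = 0" by (subst (asm) sum_nonneg_eq_0_iff) auto
      have "P = 0" using PN N0 by simp
      then have "max 0 (-s) = 0" and "(\<Sum>i\<in>UNIV. max 0 (W i)) = 0" unfolding P_def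
        by (smt (verit) sum_nonneg)+
      then have pW: "\<forall>i. max 0 (W i) = 0" by (subst (asm) sum_nonneg_eq_0_iff) auto
      have "s = 0" using s0 \<open>max 0 (-s) = 0\<close> by linarith
      then have "\<forall>i. g i = 0" using nW pW Apos unfolding W_def by (smt (verit) mult_eq_0_iff)
      then show False using gnz by blast
    qed
    then have "N > 0" unfolding N_def using Nnn by linarith
    show ?thesis
    proof (cases "s > 0")
      case True
      have "(- s) mod A = 0" using \<open>r = 0\<close> r_def by simp
      then have "A \<le> s" using term_bound0[OF Apos, of "-s"] True by simp
      then show ?thesis unfolding N_def A_def using Nnn by linarith
    next
      case False
      then have "(\<Sum>i\<in>UNIV. max 0 (- W i)) > 0" using \<open>N > 0\<close> unfolding N_def by linarith
      then obtain i where "max 0 (- W i) > 0" by (metis (no_types, lifting) linorder_not_le sum_nonpos)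
      then have "W i < 0" by linarith
      then have "A \<le> - W i" using term_bound0[OF Apos, of "W i"] Wr \<open>r = 0\<close> by simp
      moreover have "max 0 (- W i) \<le> (\<Sum>i\<in>UNIV. max 0 (- W i))" by (rule member_le_sum) auto
      ultimately show ?thesis unfolding N_def A_def by linarith
    qed
  next
    case False
    then have rpos: "r > 0" unfolding r_def using Apos by (metis order_le_neq_trans pos_mod_sign)
    have rA: "r < A" unfolding r_def using Apos by simp
    have b0: "r * (A - r) \<le> r * max 0 s + (A - r) * max 0 (-s)"
      using term_bound[OF Apos _ rpos, of "-s"] r_def by simp
    have bi: "r * (A - r) \<le> r * max 0 (- W i) + (A - r) * max 0 (W i)" for i
      using term_bound[OF Apos Wr rpos] .
    have "(\<Sum>i\<in>(UNIV::'n set). r * (A - r)) \<le> (\<Sum>i\<in>UNIV. r * max 0 (- W i) + (A - r) * max 0 (W i))"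
      by (rule sum_mono) (rule bi)
    then have "n * (r * (A - r)) \<le> r * (\<Sum>i\<in>UNIV. max 0 (- W i)) + (A - r) * (\<Sum>i\<in>UNIV. max 0 (W i))"
      unfolding n_def by (simp add: sum.distrib sum_distrib_left)
    then have "A * (r * (A - r)) \<le> r * N + (A - r) * P"
      using b0 unfolding N_def P_def A_def by (simp add: algebra_simps)
    then have "A * (r * (A - r)) \<le> A * N" using PN by (simp add: algebra_simps)
    then have "r * (A - r) \<le> N" using Apos by simp
    moreover have "(r - 1) * (A - 1 - r) \<ge> 0" using rpos rA by simp
    ultimately show ?thesis unfolding A_def by (simp add: algebra_simps)
  qed
  then show ?thesis unfolding N_def W_def s_def A_def n_def by (simp add: algebra_simps)
qed

lemma prim_axis:
  assumes L: "L > 0" and d: "b - y = L *\<^sub>R (axis k 1 :: real^'n)"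
  shows "lattice_segment y b" "lattice_length y b = L"
proof -
  have yb: "y \<noteq> b" using d L axis_nz[of k] by auto
  show "lattice_segment y b" unfolding lattice_segment_def
    using yb d int_vec_axis axis_nz by blast
  have "seg_generator y b (axis k 1)" unfolding seg_generator_def
  proof (intro conjI allI impI)
    show "int_vec (axis k 1 :: real^'n)" by (rule int_vec_axis)
    show "\<exists>t>0. axis k 1 = t *\<^sub>R (b - y)" using L d by (intro exI[of _ "1/L"]) auto
    fix w :: "real^'n" assume w: "int_vec w \<and> w \<in> span {b - y}"
    then obtain c where c: "w = c *\<^sub>R (b - y)" using in_span1 by blast
    have "w$k \<in> \<int>" using w unfolding int_vec_def by simp
    then obtain m where m: "w$k = of_int m" by (metis Ints_cases)
    have "w = (c * L) *\<^sub>R axis k 1" using c d by simp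
    moreover then have "c * L = of_int m" using m by (simp add: axis_def)
    ultimately show "\<exists>k'::int. w = of_int k' *\<^sub>R axis k 1" by auto
  qed
  then show "lattice_length y b = L" using length_gen'[OF yb _ d L] by simp
qed

lemma onev_nz: "(- onev :: real^'n) \<noteq> 0"
  by (simp add: onev_def vec_eq_iff)

lemma int_vec_monev: "int_vec (- onev :: real^'n)"
  unfolding int_vec_def onev_def by simp

lemma prim_onev:
  assumes L: "L > 0" and d: "b - y = L *\<^sub>R (- onev :: real^'n)"
  shows "lattice_segment y b" "lattice_length y b = L"
proof -
  have yb: "y \<noteq> b" using d L onev_nz by auto
  show "lattice_segment y b" unfolding lattice_segment_def
    using yb d int_vec_monev onev_nz by blast
  have "seg_generator y b (- onev)" unfolding seg_generator_def
  proof (intro conjI allI impI)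
    show "int_vec (- onev :: real^'n)" by (rule int_vec_monev)
    show "\<exists>t>0. - onev = t *\<^sub>R (b - y)" using L d by (intro exI[of _ "1/L"]) auto
    fix w :: "real^'n" assume w: "int_vec w \<and> w \<in> span {b - y}"
    then obtain c where c: "w = c *\<^sub>R (b - y)" using in_span1 by blast
    obtain k :: 'n where True by blast
    have "w$k \<in> \<int>" using w unfolding int_vec_def by simp
    then obtain m where m: "w$k = of_int m" by (metis Ints_cases)
    have "w = (c * L) *\<^sub>R (- onev)" using c d by simp
    moreover then have "c * L = - of_int m" using m by (simp add: onev_def)
    ultimately have "w = of_int (- m) *\<^sub>R (- onev)" by simp
    then show "\<exists>k'::int. w = of_int k' *\<^sub>R (- onev)" by blast
  qed
  then show "lattice_length y b = L" using length_gen'[OF yb _ d L] by simp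
qed

lemma chord_bound:
  assumes aT: "a \<in> (Tset :: (real^'n) set)" and bT: "a + c *\<^sub>R g \<in> Tset"
    and gi: "int_vec g" and gnz: "g \<noteq> 0" and cpos: "c > 0"
  shows "c * real CARD('n) \<le> real CARD('n) + 1"
proof -
  define A where "A = real CARD('n) + 1"
  have Apos: "A > 0" unfolding A_def by simp
  define h where "h i = \<lfloor>g$i\<rfloor>" for i
  have gh: "g$i = of_int (h i)" for i unfolding h_def using gi unfolding int_vec_def by (simp add: of_int_floor)
  have hnz: "\<exists>i. h i \<noteq> 0"
  proof (rule ccontr)
    assume "\<not> (\<exists>i. h i \<noteq> 0)"
    then have "g = 0" using gh by (simp add: vec_eq_iff)
    then show False using gnz by simp
  qed
  define s where "s = (\<Sum>i\<in>UNIV. h i)"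
  define A' where "A' = int CARD('n) + 1"
  have AA: "A = of_int A'" unfolding A_def A'_def by simp
  define b where "b = a + c *\<^sub>R g"
  have sb: "(\<Sum>i\<in>UNIV. b$i) = (\<Sum>i\<in>UNIV. a$i) + c * of_int s"
    unfolding b_def s_def by (simp add: sum.distrib gh sum_distrib_left)
  have mub: "mu b = mu a - c * of_int s / A"
    unfolding mu_def sb A_def by (simp add: diff_divide_distrib add_divide_distrib)
  have lb: "b$i + mu b = (a$i + mu a) + c * of_int (A' * h i - s) / A" for i
  proof -
    have "b$i = a$i + c * of_int (h i)" unfolding b_def using gh by simp
    then show ?thesis using mub Apos unfolding AA by (simp add: field_simps)
  qed
  have ma: "0 \<le> mu a" and la: "\<And>i. 0 \<le> a$i + mu a" using aT unfolding Tset_def by auto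
  have mb: "0 \<le> mu b" and lbb: "\<And>i. 0 \<le> b$i + mu b" using bT unfolding Tset_def b_def by auto
  have pt: "x \<ge> c * max 0 (- w) / A" if "x \<ge> 0" "x + c * w / A \<ge> 0" for x w :: real
  proof (cases "w \<ge> 0")
    case True then show ?thesis using that by simp
  next
    case False
    then have "max 0 (- w) = - w" by simp
    moreover have "c * (- w) / A = - (c * w / A)" by simp
    ultimately show ?thesis using that by linarith
  qed
  have t0: "mu a \<ge> c * max 0 (of_int s) / A"
  proof -
    have e: "c * (- of_int s) / A = - (c * of_int s / A)" by simp
    have "mu a + c * (- of_int s) / A \<ge> 0" using mb mub e by linarith
    from pt[OF ma this] show ?thesis by (simp only: minus_minus)
  qed
  have ti: "a$i + mu a \<ge> c * max 0 (of_int (s - A' * h i)) / A" for i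
    using pt[OF la[of i], of "of_int (A' * h i - s)"] lbb[of i] lb[of i] by simp
  have "(\<Sum>i\<in>UNIV. c * max 0 (of_int (s - A' * h i)) / A) \<le> (\<Sum>i\<in>UNIV. a$i + mu a)"
    by (rule sum_mono) (rule ti)
  then have "c * max 0 (of_int s) / A + (\<Sum>i\<in>UNIV. c * max 0 (of_int (s - A' * h i)) / A) \<le> 1"
    using t0 sum_lam[of a] by linarith
  then have "c * (max 0 (of_int s) + (\<Sum>i\<in>UNIV. max 0 (of_int (s - A' * h i)))) / A \<le> 1"
    by (simp add: sum_divide_distrib[symmetric] sum_distrib_left[symmetric] distrib_left add_divide_distrib)
  then have c1: "c * (max 0 (of_int s) + (\<Sum>i\<in>UNIV. max 0 (of_int (s - A' * h i)))) \<le> A"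
    using Apos by (simp add: divide_le_eq)
  have key: "int CARD('n) \<le> max 0 s + (\<Sum>i\<in>UNIV. max 0 (s - A' * h i))"
    using int_key[OF hnz] unfolding s_def A'_def .
  then have "real_of_int (int CARD('n)) \<le> real_of_int (max 0 s + (\<Sum>i\<in>UNIV. max 0 (s - A' * h i)))"
    by (simp only: of_int_le_iff)
  then have "real CARD('n) \<le> max 0 (of_int s) + (\<Sum>i\<in>UNIV. max 0 (of_int (s - A' * h i)))"
    by (simp add: of_int_sum of_int_max)
  then have "c * real CARD('n) \<le> c * (max 0 (of_int s) + (\<Sum>i\<in>UNIV. max 0 (of_int (s - A' * h i))))"
    using cpos by simp
  then show ?thesis using c1 unfolding A_def by linarith
qed

lemma zero_in_S: "(0::real^'n) \<in> simplex_S"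
proof -
  have "mu (0::real^'n) = 1 / (real CARD('n) + 1)" unfolding mu_def by simp
  then have "(0::real^'n) \<in> Tset" unfolding Tset_def by simp
  then show ?thesis using S_char[where 'n='n] by simp
qed

lemma diam_S_le: "lattice_diam (simplex_S::(real^'n) set) \<le> (real CARD('n) + 1) / real CARD('n)"
  unfolding lattice_diam_def
proof (rule cSup_least)
  obtain i :: 'n where True by blast
  have "axis i 1 - 0 = 1 *\<^sub>R (axis i 1 :: real^'n)" by simp
  then have "lattice_segment 0 (axis i 1 :: real^'n)" by (rule prim_axis(1)[rotated]) simp
  then show "{lattice_length a b |a b. a \<in> (simplex_S::(real^'n) set) \<and> b \<in> simplex_S \<and> lattice_segment a b} \<noteq> {}"
    using zero_in_S vertices_in_S by blast
next
  fix x assume "x \<in> {lattice_length a b |a b. a \<in> (simplex_S::(real^'n) set) \<and> b \<in> simplex_S \<and> lattice_segment a b}"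
  then obtain a b :: "real^'n" where ab: "a \<in> simplex_S" "b \<in> simplex_S" "lattice_segment a b" and x: "x = lattice_length a b"
    by blast
  obtain g where g: "seg_generator a b g" using gen_exists[OF ab(3)] by blast
  have anb: "a \<noteq> b" using ab(3) unfolding lattice_segment_def by simp
  obtain t where t: "t > 0" "g = t *\<^sub>R (b - a)" using g unfolding seg_generator_def by blast
  have gi: "int_vec g" using g unfolding seg_generator_def by simp
  have gnz: "g \<noteq> 0" using t anb by simp
  have ba: "b - a = (1/t) *\<^sub>R g" using t by simp
  have len: "lattice_length a b = 1/t" using length_gen'[OF anb g ba] t by simp
  have "a + (1/t) *\<^sub>R g = b" using ba by (simp add: algebra_simps)
  then have "(1/t) * real CARD('n) \<le> real CARD('n) + 1"
    using chord_bound[of a "1/t" g] ab S_char[where 'n='n] gi gnz t by simp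
  then show "x \<le> (real CARD('n) + 1) / real CARD('n)" unfolding x len
    by (simp add: le_divide_eq)
qed

lemma small_s:
  fixes p :: "real^'n"
  shows "\<exists>s. 0 < s \<and> s < 1 \<and> s * (real CARD('n) + 1) * \<bar>mu p\<bar> < 1 \<and>
     (\<forall>j. s * (real CARD('n) + 1) * \<bar>p$j + mu p\<bar> < 1)"
proof -
  define A where "A = real CARD('n) + 1"
  have A2: "A \<ge> 2" unfolding A_def by simp
  define M where "M = \<bar>mu p\<bar> + (\<Sum>j\<in>UNIV. \<bar>p$j + mu p\<bar>)"
  have Mj: "\<bar>p$j + mu p\<bar> \<le> M" for j
  proof -
    have "\<bar>p$j + mu p\<bar> \<le> (\<Sum>j\<in>UNIV. \<bar>p$j + mu p\<bar>)" by (rule member_le_sum) auto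
    then show ?thesis unfolding M_def by simp
  qed
  have M0: "\<bar>mu p\<bar> \<le> M" unfolding M_def by (simp add: sum_nonneg)
  have Mnn: "M \<ge> 0" using M0 by simp
  define s where "s = 1 / (A * (M + 1))"
  have pos: "A * (M + 1) > 0" using A2 Mnn by simp
  have sA: "s * A = 1 / (M + 1)" unfolding s_def using A2 Mnn by simp
  have "s > 0" unfolding s_def using pos by simp
  moreover have "s < 1"
  proof -
    have "A * (M + 1) \<ge> 2 * 1" using A2 Mnn by (intro mult_mono) auto
    then show ?thesis unfolding s_def by simp
  qed
  moreover have "s * A * \<bar>mu p\<bar> < 1" unfolding sA using M0 Mnn by (simp add: divide_less_eq)
  moreover have "\<forall>j. s * A * \<bar>p$j + mu p\<bar> < 1"
  proof
    fix j
    have "\<bar>p$j + mu p\<bar> < M + 1" using Mj[of j] by simp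
    then show "s * A * \<bar>p$j + mu p\<bar> < 1" unfolding sA using Mnn by (simp add: divide_less_eq)
  qed
  ultimately show ?thesis unfolding A_def by blast
qed

lemma caseA:
  fixes K :: "(real^'n) set" and p :: "real^'n"
  assumes cK: "convex K" and SK: "simplex_S \<subseteq> K" and pK: "p \<in> K" and neg: "p$k + mu p < 0"
  shows "\<exists>y\<in>K. \<exists>b\<in>K. lattice_segment y b \<and> lattice_length y b > (real CARD('n) + 1) / real CARD('n)"
proof -
  define D where "D = real CARD('n)"
  define A where "A = D + 1"
  have Dpos: "D > 0" unfolding D_def by simp
  have Apos: "A > 0" unfolding A_def using Dpos by simp
  obtain s where s: "0 < s" "s < 1" "s * A * \<bar>mu p\<bar> < 1" "\<And>j. s * A * \<bar>p$j + mu p\<bar> < 1"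
    using small_s[of p] unfolding A_def D_def by blast
  define P where "P = (\<Sum>j\<in>UNIV. p$j)"
  have mup: "mu p = (1 - P) / A" unfolding mu_def P_def A_def D_def by simp
  define \<alpha> where "\<alpha> = - (p$k + mu p)"
  have apos: "\<alpha> > 0" unfolding \<alpha>_def using neg by simp
  define \<tau> where "\<tau> = (1 + s * \<alpha> * A) / D"
  have "s * \<alpha> * A > 0" using s apos Apos by simp
  then have tpos: "\<tau> > 0" unfolding \<tau>_def using Dpos by (intro divide_pos_pos) auto
  have Dt: "D * \<tau> = 1 + s * \<alpha> * A" unfolding \<tau>_def using Dpos by simp
  define y where "y = (- \<tau>) *\<^sub>R (axis k 1 :: real^'n)"
  define f where "f = (1 / (1 - s)) *\<^sub>R (y - s *\<^sub>R p)"
  have s1: "1 - s \<noteq> 0" using s by simp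
  have fj: "f$j = ((if j = k then - \<tau> else 0) - s * p$j) / (1 - s)" for j
    unfolding f_def y_def by (simp add: axis_def)
  have Sf: "(\<Sum>j\<in>UNIV. f$j) = (- \<tau> - s * P) / (1 - s)"
  proof -
    have "(\<Sum>j\<in>UNIV. f$j) = (\<Sum>j\<in>UNIV. ((if j = k then - \<tau> else 0) - s * p$j)) / (1 - s)"
      unfolding fj by (simp add: sum_divide_distrib)
    also have "\<dots> = (- \<tau> - s * P) / (1 - s)"
      unfolding P_def by (simp add: sum_subtractf sum_distrib_left)
    finally show ?thesis .
  qed
  have muf: "mu f = (1 + \<tau> - s * A * mu p) / ((1 - s) * A)"
  proof -
    have "mu f = (1 - (- \<tau> - s * P) / (1 - s)) / A" unfolding mu_def Sf A_def D_def by simp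
    also have "\<dots> = (1 + \<tau> - s * A * mu p) / ((1 - s) * A)" unfolding mup using s1 Apos by (simp add: field_simps)
    finally show ?thesis .
  qed
  have lf: "f$j + mu f = (1 + \<tau> - A * (if j = k then \<tau> else 0) - s * A * (p$j + mu p)) / ((1 - s) * A)" for j
  proof -
    have gen: "(X - s * q) / (1 - s) + Nn / ((1 - s) * A) = (A * X - s * A * q + Nn) / ((1 - s) * A)"
      for X q Nn :: real
    proof -
      have "(A * X - s * A * q + Nn) / ((1 - s) * A) = (A * (X - s * q)) / (A * (1 - s)) + Nn / ((1 - s) * A)"
        by (simp add: add_divide_distrib[symmetric] algebra_simps)
      also have "(A * (X - s * q)) / (A * (1 - s)) = (X - s * q) / (1 - s)" using Apos by simp
      finally show ?thesis by simp
    qed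
    have "f$j + mu f = ((if j = k then - \<tau> else 0) - s * p$j) / (1 - s) + (1 + \<tau> - s * A * mu p) / ((1 - s) * A)"
      using fj muf by simp
    also have "\<dots> = (A * (if j = k then - \<tau> else 0) - s * A * p$j + (1 + \<tau> - s * A * mu p)) / ((1 - s) * A)"
      by (rule gen)
    also have "A * (if j = k then - \<tau> else 0) - s * A * p$j + (1 + \<tau> - s * A * mu p) =
       1 + \<tau> - A * (if j = k then \<tau> else 0) - s * A * (p$j + mu p)"
      by (cases "j = k") (simp_all add: algebra_simps)
    finally show ?thesis .
  qed
  have fT: "f \<in> Tset"
    unfolding Tset_def
  proof (intro CollectI conjI allI)
    have "s * A * mu p < 1" using s(3) by (smt (verit) abs_ge_self mult_left_mono Apos s(1) mult_pos_pos)
    then show "0 \<le> mu f" unfolding muf using tpos s Apos by (intro divide_nonneg_pos) auto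
    fix j
    show "0 \<le> f$j + mu f"
    proof (cases "j = k")
      case True
      have "1 + \<tau> - A * \<tau> - s * A * (p$j + mu p) = 0"
        using Dt True unfolding \<alpha>_def A_def by (simp add: algebra_simps)
      then show ?thesis unfolding lf using True by simp
    next
      case False
      have "s * A * (p$j + mu p) < 1" using s(4)[of j] by (smt (verit) abs_ge_self mult_left_mono Apos s(1) mult_pos_pos)
      then show ?thesis unfolding lf using False tpos s Apos by (intro divide_nonneg_pos) auto
    qed
  qed
  then have fK: "f \<in> K" using SK S_char[where 'n='n] by auto
  have "y = (1 - s) *\<^sub>R f + s *\<^sub>R p" unfolding f_def using s1 by simp
  then have yK: "y \<in> K" using convexD[OF cK fK pK, of "1 - s" s] s by simp
  have bK: "axis k 1 \<in> K" using SK vertices_in_S by blast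
  have d: "axis k 1 - y = (1 + \<tau>) *\<^sub>R (axis k 1 :: real^'n)" unfolding y_def by (simp add: algebra_simps)
  have L: "1 + \<tau> > 0" using tpos by simp
  have "1 + \<tau> > A / D"
  proof -
    have "D * (1 + \<tau>) = A + s * \<alpha> * A" using Dt unfolding A_def by (simp add: algebra_simps)
    moreover have "s * \<alpha> * A > 0" using s apos Apos by simp
    ultimately have "D * (1 + \<tau>) > A" by simp
    then show ?thesis using Dpos by (simp add: divide_less_eq mult.commute)
  qed
  then have "lattice_segment y (axis k 1) \<and> lattice_length y (axis k 1) > (real CARD('n) + 1) / real CARD('n)"
    using prim_axis[OF L d] unfolding A_def D_def by simp
  then show ?thesis using yK bK by blast
qed

lemma caseB:
  fixes K :: "(real^'n) set" and p :: "real^'n"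
  assumes cK: "convex K" and SK: "simplex_S \<subseteq> K" and pK: "p \<in> K" and neg: "mu p < 0"
  shows "\<exists>y\<in>K. \<exists>b\<in>K. lattice_segment y b \<and> lattice_length y b > (real CARD('n) + 1) / real CARD('n)"
proof -
  define D where "D = real CARD('n)"
  define A where "A = D + 1"
  have Dpos: "D > 0" unfolding D_def by simp
  have Apos: "A > 0" unfolding A_def using Dpos by simp
  obtain s where s: "0 < s" "s < 1" "s * A * \<bar>mu p\<bar> < 1" "\<And>j. s * A * \<bar>p$j + mu p\<bar> < 1"
    using small_s[of p] unfolding A_def D_def by blast
  define P where "P = (\<Sum>j\<in>UNIV. p$j)"
  have mup: "mu p = (1 - P) / A" unfolding mu_def P_def A_def D_def by simp
  define \<alpha> where "\<alpha> = - mu p"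
  have apos: "\<alpha> > 0" unfolding \<alpha>_def using neg by simp
  define \<tau> where "\<tau> = (1 + s * \<alpha> * A) / D"
  have "s * \<alpha> * A > 0" using s apos Apos by simp
  then have tpos: "\<tau> > 0" unfolding \<tau>_def using Dpos by (intro divide_pos_pos) auto
  have Dt: "D * \<tau> = 1 + s * \<alpha> * A" unfolding \<tau>_def using Dpos by simp
  define y where "y = \<tau> *\<^sub>R (onev :: real^'n)"
  define f where "f = (1 / (1 - s)) *\<^sub>R (y - s *\<^sub>R p)"
  have s1: "1 - s \<noteq> 0" using s by simp
  have fj: "f$j = (\<tau> - s * p$j) / (1 - s)" for j
    unfolding f_def y_def by (simp add: onev_def)
  have Sf: "(\<Sum>j\<in>UNIV. f$j) = (D * \<tau> - s * P) / (1 - s)"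
  proof -
    have "(\<Sum>j\<in>UNIV. f$j) = (\<Sum>j\<in>UNIV. (\<tau> - s * p$j)) / (1 - s)"
      unfolding fj by (simp add: sum_divide_distrib)
    also have "\<dots> = (D * \<tau> - s * P) / (1 - s)"
      unfolding P_def D_def by (simp add: sum_subtractf sum_distrib_left)
    finally show ?thesis .
  qed
  have muf: "mu f = (1 - D * \<tau> - s * A * mu p) / ((1 - s) * A)"
  proof -
    have "mu f = (1 - (D * \<tau> - s * P) / (1 - s)) / A" unfolding mu_def Sf A_def D_def by simp
    also have "\<dots> = (1 - D * \<tau> - s * A * mu p) / ((1 - s) * A)" unfolding mup using s1 Apos by (simp add: field_simps)
    finally show ?thesis .
  qed
  have muf0: "mu f = 0" unfolding muf using Dt unfolding \<alpha>_def by simp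
  have lf: "f$j + mu f = (1 + \<tau> - s * A * (p$j + mu p)) / ((1 - s) * A)" for j
  proof -
    have "f$j + mu f = (\<tau> - s * p$j) / (1 - s)" using fj muf0 by simp
    also have "\<dots> = (A * \<tau> - s * A * p$j) / ((1 - s) * A)" using Apos s1 by (simp add: field_simps)
    also have "A * \<tau> - s * A * p$j = 1 + \<tau> - s * A * (p$j + mu p)"
      using Dt unfolding \<alpha>_def A_def by (simp add: algebra_simps)
    finally show ?thesis .
  qed
  have fT: "f \<in> Tset"
    unfolding Tset_def
  proof (intro CollectI conjI allI)
    show "0 \<le> mu f" using muf0 by simp
    fix j
    have "s * A * (p$j + mu p) < 1" using s(4)[of j] by (smt (verit) abs_ge_self mult_left_mono Apos s(1) mult_pos_pos)
    then show "0 \<le> f$j + mu f" unfolding lf using tpos s Apos by (intro divide_nonneg_pos) auto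
  qed
  then have fK: "f \<in> K" using SK S_char[where 'n='n] by auto
  have "y = (1 - s) *\<^sub>R f + s *\<^sub>R p" unfolding f_def using s1 by simp
  then have yK: "y \<in> K" using convexD[OF cK fK pK, of "1 - s" s] s by simp
  have bK: "- onev \<in> K" using SK vertices_in_S by blast
  have d: "- onev - y = (1 + \<tau>) *\<^sub>R (- onev :: real^'n)" unfolding y_def by (simp add: algebra_simps)
  have L: "1 + \<tau> > 0" using tpos by simp
  have "1 + \<tau> > A / D"
  proof -
    have "D * (1 + \<tau>) = A + s * \<alpha> * A" using Dt unfolding A_def by (simp add: algebra_simps)
    moreover have "s * \<alpha> * A > 0" using s apos Apos by simp
    ultimately have "D * (1 + \<tau>) > A" by simp
    then show ?thesis using Dpos by (simp add: divide_less_eq mult.commute)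
  qed
  then have "lattice_segment y (- onev) \<and> lattice_length y (- onev) > (real CARD('n) + 1) / real CARD('n)"
    using prim_onev[OF L d] unfolding A_def D_def by simp
  then show ?thesis using yK bK by blast
qed

lemma complete: "lattice_complete (simplex_S :: (real^'n) set)"
  unfolding lattice_complete_def
proof (intro conjI allI impI)
  show "convex_body (simplex_S :: (real^'n) set)" by (rule S_body)
  fix K :: "(real^'n) set"
  assume h: "convex_body K \<and> simplex_S \<subset> K"
  then have cK: "convex K" "compact K" and sub: "simplex_S \<subset> K"
    unfolding convex_body_def by blast+
  obtain p where pK: "p \<in> K" and pS: "p \<notin> simplex_S" using sub by blast
  then have "p \<notin> Tset" using S_char[where 'n='n] by simp
  then have "mu p < 0 \<or> (\<exists>k. p$k + mu p < 0)" unfolding Tset_def by (auto simp: not_le)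
  then obtain y b where yb: "y \<in> K" "b \<in> K" "lattice_segment y b"
    and len: "lattice_length y b > (real CARD('n) + 1) / real CARD('n)"
    using caseA[OF cK(1) _ pK] caseB[OF cK(1) _ pK] sub by blast
  obtain R where R: "\<forall>x\<in>K. norm x \<le> R" using compact_imp_bounded[OF cK(2)] bounded_iff by blast
  have bdd: "bdd_above {lattice_length a b |a b. a \<in> K \<and> b \<in> K \<and> lattice_segment a b}"
  proof (rule bdd_aboveI[where M="2 * R"])
    fix x assume "x \<in> {lattice_length a b |a b. a \<in> K \<and> b \<in> K \<and> lattice_segment a b}"
    then obtain a b where ab: "a \<in> K" "b \<in> K" "lattice_segment a b" "x = lattice_length a b" by blast
    have "x \<le> norm (b - a)" using length_le_norm[OF ab(3)] ab(4) by simp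
    also have "\<dots> \<le> norm b + norm a" by (rule norm_triangle_ineq4)
    also have "\<dots> \<le> 2 * R" using R ab(1,2) by (smt (verit))
    finally show "x \<le> 2 * R" .
  qed
  have "lattice_length y b \<le> lattice_diam K"
    unfolding lattice_diam_def by (rule cSup_upper) (use yb bdd in blast)+
  then have "lattice_diam (simplex_S :: (real^'n) set) < lattice_diam K"
    using len diam_S_le[where 'n='n] by linarith
  then show "lattice_diam K \<noteq> lattice_diam (simplex_S :: (real^'n) set)" by simp
qed

theorem proposition3p12:
  shows "lattice_reduced (simplex_S :: (real^'n) set) \<and> lattice_complete (simplex_S :: (real^'n) set)"
  using reduced complete by blast

end
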